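(* Let $G=(V,E)$ be a simple undirected graph and let $C=(v_0,\ldots,v_{k-1})$, $k\ge 4$, be an ordered list of distinct vertices of $V$ with $\textnormal{int}(C)\cap E=\emptyset$. Then the chordal inequality $$\sum_{f\in\textnormal{int}(C)}x_f-(|C|-3)\Big(\sum_{f\in F(C)}x_f-|F(C)|+1\Big)\ \ge\ 0$$ is facet-defining for $\textnormal{conv}(X(G[V(C)]))$.
   Context: $V(C)=\{v_0,\ldots,v_{k-1}\}$, $|C|=k$, $\textnormal{ext}(C)=\{\{v_{i-1},v_i\}\}_{i=1}^{k-1}\cup\{\{v_{k-1},v_0\}\}$, $\textnormal{int}(C)=\binom{V(C)}{2}\setminus\textnormal{ext}(C)$, $F(C)=\textnormal{ext}(C)\setminus E$. $G[V(C)]$ is the induced subgraph; its set of fill edges $\binom{V(C)}{2}\setminus E$ equals $\textnormal{int}(C)\cup F(C)$. For a graph $H=(V_H,E_H)$ and $x\in\{0,1\}^{E^c(H)}$ with $E^c(H)=\binom{V_H}{2}\setminus E_H$, $E(x)=\{f:x_f=1\}$ and $X(H)=\{x:(V_H,E_H\cup E(x))\text{ is chordal}\}$; a graph is chordal if every cycle with at least four vertices has a chord. *)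

theory Defs
  imports "HOL-Analysis.Analysis"
begin

definition simple_graph :: "'a set \<Rightarrow> 'a set set \<Rightarrow> bool" where
  "simple_graph V E \<longleftrightarrow> (\<forall>e\<in>E. \<exists>u v. e = {u, v} \<and> u \<noteq> v \<and> u \<in> V \<and> v \<in> V)"

definition pairs :: "'a set \<Rightarrow> 'a set set" where
  "pairs S = {{u, v} | u v. u \<in> S \<and> v \<in> S \<and> u \<noteq> v}"

definition ext :: "'a list \<Rightarrow> 'a set set" where
  "ext cs = {{cs ! i, cs ! ((i + 1) mod length cs)} | i. i < length cs}"

definition int_edges :: "'a list \<Rightarrow> 'a set set" where
  "int_edges cs = pairs (set cs) - ext cs"

definition F_edges :: "'a set set \<Rightarrow> 'a list \<Rightarrow> 'a set set" where
  "F_edges E cs = ext cs - E"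

definition is_cycle :: "'a set \<Rightarrow> 'a set set \<Rightarrow> 'a list \<Rightarrow> bool" where
  "is_cycle V E cs \<longleftrightarrow> length cs \<ge> 3 \<and> distinct cs \<and> set cs \<subseteq> V \<and>
     (\<forall>i < length cs. {cs ! i, cs ! ((i + 1) mod length cs)} \<in> E)"

definition has_chord :: "'a set set \<Rightarrow> 'a list \<Rightarrow> bool" where
  "has_chord E cs \<longleftrightarrow> (\<exists>e \<in> E. e \<in> pairs (set cs) \<and> e \<notin> ext cs)"

definition chordal :: "'a set \<Rightarrow> 'a set set \<Rightarrow> bool" where
  "chordal V E \<longleftrightarrow> (\<forall>cs. is_cycle V E cs \<and> length cs \<ge> 4 \<longrightarrow> has_chord E cs)"

definition induced_edges :: "'a set set \<Rightarrow> 'a set \<Rightarrow> 'a set set" where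
  "induced_edges E S = {e \<in> E. e \<subseteq> S}"

definition nonedges :: "'a set \<Rightarrow> 'a set set \<Rightarrow> 'a set set" where
  "nonedges V E = pairs V - E"

text \<open>X(H) as a subset of R^{E^c(H)}: coordinates are indexed by a finite type 'n,
  identified with E^c(H) through a bijection idx.\<close>
definition Xset :: "'a set \<Rightarrow> 'a set set \<Rightarrow> ('n::finite \<Rightarrow> 'a set) \<Rightarrow> (real ^ 'n) set" where
  "Xset V E idx = {x. (\<forall>i. x $ i \<in> {0, 1}) \<and> chordal V (E \<union> {idx i | i. x $ i = 1})}"

definition facet_defining :: "'v::euclidean_space set \<Rightarrow> ('v \<Rightarrow> real) \<Rightarrow> real \<Rightarrow> bool" where
  "facet_defining P g b \<longleftrightarrow> (\<forall>x\<in>P. g x \<ge> b) \<and> {x \<in> P. g x = b} facet_of P"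

end

theory Submission
  imports Defs
begin


fun pe :: "'a list \<Rightarrow> 'a set set" where
  "pe (x # y # zs) = insert {x, y} (pe (y # zs))"
| "pe _ = {}"

lemma pe_nth: "pe xs = {{xs ! l, xs ! (l + 1)} | l. l + 1 < length xs}"
proof (induction xs rule: pe.induct)
  case (1 x y zs)
  have "{{(x # y # zs) ! l, (x # y # zs) ! (l + 1)} | l. l + 1 < length (x # y # zs)}
     = insert {x, y} {{(y # zs) ! l, (y # zs) ! (l + 1)} | l. l + 1 < length (y # zs)}"
    (is "?L = ?R")
  proof
    show "?L \<subseteq> ?R"
    proof
      fix e assume "e \<in> ?L"
      then obtain l where l: "e = {(x # y # zs) ! l, (x # y # zs) ! (l + 1)}" "l + 1 < length (x # y # zs)" by blast
      show "e \<in> ?R"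
      proof (cases l)
        case 0 then show ?thesis using l by simp
      next
        case (Suc m) then show ?thesis using l by auto
      qed
    qed
  next
    show "?R \<subseteq> ?L"
    proof
      fix e assume "e \<in> ?R"
      then consider "e = {x,y}" | m where "e = {(y # zs) ! m, (y # zs) ! (m + 1)}" "m + 1 < length (y # zs)" by blast
      then show "e \<in> ?L"
      proof cases
        case 1 then show ?thesis by (rule_tac CollectI, rule_tac x=0 in exI, simp)
      next
        case 2 then show ?thesis by (rule_tac CollectI, rule_tac x="Suc m" in exI, simp)
      qed
    qed
  qed
  then show ?case using 1 by simp
qed auto

lemma pe_append: "pe (xs @ y # ys) = pe (xs @ [y]) \<union> pe (y # ys)"
  by (induction xs rule: pe.induct) auto

lemma pe_snoc: "xs \<noteq> [] \<Longrightarrow> pe (xs @ [y]) = insert {last xs, y} (pe xs)"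
proof (induction xs rule: pe.induct)
  case (1 x y zs) then show ?case by (cases zs) auto
qed auto

lemma pe_subset: "e \<in> pe xs \<Longrightarrow> \<exists>a b. e = {a, b} \<and> a \<in> set xs \<and> b \<in> set xs"
proof (induction xs rule: pe.induct)
  case (1 x y zs) then show ?case by (metis insert_iff list.set_intros(1,2) pe.simps(1))
qed auto

lemma pe_sub_set: "e \<in> pe xs \<Longrightarrow> e \<subseteq> set xs"
  using pe_subset by fastforce

lemma ext_pe: assumes "cs \<noteq> []" shows "ext cs = pe (cs @ [hd cs])"
proof -
  let ?k = "length cs"
  have "ext cs = {{(cs @ [hd cs]) ! l, (cs @ [hd cs]) ! (l + 1)} | l. l + 1 < length (cs @ [hd cs])}"
    unfolding ext_def
  proof (intro equalityI subsetI)
    fix e assume "e \<in> {{cs ! i, cs ! ((i + 1) mod length cs)} |i. i < length cs}"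
    then obtain i where i: "e = {cs ! i, cs ! ((i + 1) mod ?k)}" "i < ?k" by blast
    show "e \<in> {{(cs @ [hd cs]) ! l, (cs @ [hd cs]) ! (l + 1)} | l. l + 1 < length (cs @ [hd cs])}"
    proof (cases "i + 1 < ?k")
      case True then show ?thesis using i by (auto simp: nth_append intro!: exI[of _ i])
    next
      case False
      then have "i + 1 = ?k" using i by simp
      then show ?thesis using i assms by (auto simp: nth_append hd_conv_nth intro!: exI[of _ i])
    qed
  next
    fix e assume "e \<in> {{(cs @ [hd cs]) ! l, (cs @ [hd cs]) ! (l + 1)} | l. l + 1 < length (cs @ [hd cs])}"
    then obtain i where i: "e = {(cs @ [hd cs]) ! i, (cs @ [hd cs]) ! (i + 1)}" "i + 1 < ?k + 1" by auto
    show "e \<in> {{cs ! i, cs ! ((i + 1) mod length cs)} |i. i < length cs}"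
    proof (cases "i + 1 < ?k")
      case True then show ?thesis using i by (auto simp: nth_append intro!: exI[of _ i])
    next
      case False
      then have "i + 1 = ?k" using i by simp
      then show ?thesis using i assms by (auto simp: nth_append hd_conv_nth intro!: exI[of _ i])
    qed
  qed
  then show ?thesis by (simp add: pe_nth)
qed

lemma ext_rotate1: "ext (rotate1 cs) = ext cs"
proof (cases cs)
  case Nil then show ?thesis by simp
next
  case (Cons a t)
  show ?thesis
  proof (cases t)
    case Nil then show ?thesis using Cons by simp
  next
    case (Cons b u)
    have "ext (rotate1 cs) = pe (t @ [a] @ [b])" using Cons \<open>cs = a # t\<close> by (simp add: ext_pe)
    also have "\<dots> = pe (t @ [a]) \<union> pe [a, b]" by (metis append.assoc append_Cons append_Nil pe_append)
    also have "\<dots> = ext cs" using Cons \<open>cs = a # t\<close> by (auto simp: ext_pe)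
    finally show ?thesis .
  qed
qed

lemma ext_rotate: "ext (rotate n cs) = ext cs"
  by (induction n) (auto simp: ext_rotate1)

lemma int_edges_rotate: "int_edges (rotate n cs) = int_edges cs"
  by (simp add: int_edges_def ext_rotate)

lemma F_edges_rotate: "F_edges E (rotate n cs) = F_edges E cs"
  by (simp add: F_edges_def ext_rotate)

lemma ext_Cons: "ext (x # t) = pe (x # t @ [x])"
  by (simp add: ext_pe)

lemma is_cycle_ext: "is_cycle V E cs \<longleftrightarrow> 3 \<le> length cs \<and> distinct cs \<and> set cs \<subseteq> V \<and> ext cs \<subseteq> E"
  unfolding is_cycle_def ext_def by blast

lemma is_cycle_rotate: "is_cycle V E (rotate n cs) \<longleftrightarrow> is_cycle V E cs"
  by (simp add: is_cycle_ext ext_rotate)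

lemma has_chord_rotate: "has_chord E (rotate n cs) \<longleftrightarrow> has_chord E cs"
  by (simp add: has_chord_def ext_rotate)



lemma rotate_head: assumes "x \<in> set cs" shows "\<exists>n t. rotate n cs = x # t"
proof -
  obtain i where i: "i < length cs" "cs ! i = x" using assms by (meson in_set_conv_nth)
  have ne: "rotate i cs \<noteq> []" using i by auto
  have "rotate i cs ! 0 = cs ! ((i + 0) mod length cs)" using i by (intro nth_rotate) auto
  then have "rotate i cs ! 0 = x" using i by simp
  then have "rotate i cs = x # tl (rotate i cs)" using ne by (cases "rotate i cs") auto
  then show ?thesis by blast
qed

lemma ext_head: assumes tne: "t \<noteq> []" shows "ext (x # t) = insert {x, hd t} (insert {last t, x} (pe t))"
proof -
  have "ext (x#t) = insert {x, hd t} (pe (t @ [x]))" using tne by (cases t) (auto simp: ext_Cons)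
  then show ?thesis using pe_snoc[OF tne] by simp
qed

lemma endpoints_not_pe: assumes "distinct t" "3 \<le> length t" shows "{hd t, last t} \<notin> pe t"
proof
  assume "{hd t, last t} \<in> pe t"
  then obtain l where l: "{hd t, last t} = {t ! l, t ! (l + 1)}" "l + 1 < length t" by (auto simp: pe_nth)
  have tne: "t \<noteq> []" using assms by auto
  have h: "hd t = t ! 0" "last t = t ! (length t - 1)" by (simp_all add: hd_conv_nth[OF tne] last_conv_nth[OF tne])
  have "(t ! 0 = t ! l \<and> t ! (length t - 1) = t ! (l+1)) \<or> (t ! 0 = t ! (l+1) \<and> t ! (length t - 1) = t ! l)"
    using l(1) h by (auto simp: doubleton_eq_iff)
  then show False
  proof
    assume a: "t ! 0 = t ! l \<and> t ! (length t - 1) = t ! (l+1)"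
    then have "0 = l" using nth_eq_iff_index_eq[OF assms(1), of 0 l] l(2) tne by simp
    moreover have "length t - 1 = l + 1" using a nth_eq_iff_index_eq[OF assms(1), of "length t - 1" "l+1"] l(2) by simp
    ultimately show False using assms(2) by simp
  next
    assume a: "t ! 0 = t ! (l+1) \<and> t ! (length t - 1) = t ! l"
    then have "0 = l + 1" using nth_eq_iff_index_eq[OF assms(1), of 0 "l+1"] l(2) tne by simp
    then show False by simp
  qed
qed

lemma pe_not_mem: "v \<notin> set t \<Longrightarrow> e \<in> pe t \<Longrightarrow> v \<notin> e"
  using pe_sub_set by blast

definition simplicial :: "'a set \<Rightarrow> 'a set set \<Rightarrow> 'a \<Rightarrow> bool" where
  "simplicial V E v \<longleftrightarrow> (\<forall>a b. a \<in> V \<longrightarrow> b \<in> V \<longrightarrow> a \<noteq> b \<longrightarrow> a \<noteq> v \<longrightarrow> b \<noteq> v \<longrightarrow>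
      {v, a} \<in> E \<longrightarrow> {v, b} \<in> E \<longrightarrow> {a, b} \<in> E)"

lemma cycle_through:
  assumes "is_cycle V E cs" "4 \<le> length cs" "v \<in> set cs"
  obtains n t where "rotate n cs = v # t" "distinct t" "3 \<le> length t" "v \<notin> set t"
    "set t \<subseteq> V" "v \<in> V" "{v, hd t} \<in> E" "{last t, v} \<in> E" "pe t \<subseteq> E" "hd t \<noteq> last t"
    "ext (v # t) = insert {v, hd t} (insert {last t, v} (pe t))"
proof -
  obtain n t where r: "rotate n cs = v # t" using rotate_head assms(3) by metis
  have c: "is_cycle V E (v # t)" using assms(1) r is_cycle_rotate by metis
  have "length (rotate n cs) = length cs" by simp
  then have lt: "3 \<le> length t" using assms(2) r by simp
  then have tne: "t \<noteq> []" by auto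
  have d: "distinct (v # t)" using c by (simp add: is_cycle_ext)
  have dt: "distinct t" using d by simp
  have hl: "hd t \<noteq> last t"
    using nth_eq_iff_index_eq[OF dt, of 0 "length t - 1"] lt tne by (simp add: hd_conv_nth[OF tne] last_conv_nth[OF tne])
  have ce: "set (v # t) \<subseteq> V" "ext (v # t) \<subseteq> E" using c unfolding is_cycle_ext by blast+
  have eh: "ext (v # t) = insert {v, hd t} (insert {last t, v} (pe t))" by (rule ext_head[OF tne])
  show ?thesis
  proof (rule that[OF r dt lt])
    show "v \<notin> set t" using d by simp
    show "set t \<subseteq> V" "v \<in> V" using ce(1) by auto
    show "{v, hd t} \<in> E" "{last t, v} \<in> E" "pe t \<subseteq> E" using ce(2) unfolding eh by blast+
  qed (fact hl, fact eh)
qed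

lemma chordal_simplicial:
  assumes "simplicial V E v" "chordal (V - {v}) E"
  shows "chordal V E"
  unfolding chordal_def
proof (intro allI impI)
  fix cs assume a: "is_cycle V E cs \<and> 4 \<le> length cs"
  show "has_chord E cs"
  proof (cases "v \<in> set cs")
    case False
    then have "is_cycle (V - {v}) E cs" using a by (auto simp: is_cycle_def)
    then show ?thesis using assms(2) a by (auto simp: chordal_def)
  next
    case True
    obtain n t where t: "rotate n cs = v # t" "distinct t" "3 \<le> length t" "v \<notin> set t"
      "set t \<subseteq> V" "v \<in> V" "{v, hd t} \<in> E" "{last t, v} \<in> E" "pe t \<subseteq> E" "hd t \<noteq> last t"
      "ext (v # t) = insert {v, hd t} (insert {last t, v} (pe t))"
      by (rule cycle_through[OF conjunct1[OF a] conjunct2[OF a] True])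
    have tne: "t \<noteq> []" using t(3) by auto
    have hin: "hd t \<in> set t" "last t \<in> set t" using tne by auto
    have vl: "{v, last t} \<in> E" using t(8) by (simp add: insert_commute)
    have nv: "hd t \<noteq> v" "last t \<noteq> v" using hin t(4) by auto
    have "{hd t, last t} \<in> E" using assms(1) unfolding simplicial_def
      using t(5) hin t(10) nv t(7) vl by blast
    moreover have "{hd t, last t} \<in> pairs (set (v # t))" using hin t(10) unfolding pairs_def by auto
    moreover have "{hd t, last t} \<notin> ext (v # t)"
    proof -
      have "v \<notin> {hd t, last t}" using nv by blast
      then have "{hd t, last t} \<noteq> {v, hd t}" "{hd t, last t} \<noteq> {last t, v}" by blast+
      then show ?thesis unfolding t(11) using endpoints_not_pe[OF t(2) t(3)] by blast
    qed
    ultimately have "has_chord E (v # t)" unfolding has_chord_def by blast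
    then show ?thesis using t(1) has_chord_rotate by metis
  qed
qed

lemma chordal_universal:
  assumes "\<And>a. a \<in> V \<Longrightarrow> a \<noteq> u \<Longrightarrow> {u, a} \<in> E" "chordal (V - {u}) E"
  shows "chordal V E"
  unfolding chordal_def
proof (intro allI impI)
  fix cs assume a: "is_cycle V E cs \<and> 4 \<le> length cs"
  show "has_chord E cs"
  proof (cases "u \<in> set cs")
    case False
    then have "is_cycle (V - {u}) E cs" using a by (auto simp: is_cycle_def)
    then show ?thesis using assms(2) a by (auto simp: chordal_def)
  next
    case True
    obtain n t where t: "rotate n cs = u # t" "distinct t" "3 \<le> length t" "u \<notin> set t"
      "set t \<subseteq> V" "u \<in> V" "{u, hd t} \<in> E" "{last t, u} \<in> E" "pe t \<subseteq> E" "hd t \<noteq> last t"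
      "ext (u # t) = insert {u, hd t} (insert {last t, u} (pe t))"
      by (rule cycle_through[OF conjunct1[OF a] conjunct2[OF a] True])
    let ?z = "t ! 1"
    have z: "?z \<in> set t" using t(3) by auto
    have tne: "t \<noteq> []" using t(3) by auto
    have "?z \<noteq> hd t" using t(2,3) tne nth_eq_iff_index_eq[OF t(2), of 1 0] by (simp add: hd_conv_nth[OF tne])
    moreover have "?z \<noteq> last t" using t(2,3) tne nth_eq_iff_index_eq[OF t(2), of 1 "length t - 1"] by (simp add: last_conv_nth[OF tne])
    moreover have "?z \<noteq> u" using z t(4) by auto
    moreover have "{u, ?z} \<notin> pe t" using pe_not_mem[OF t(4)] by blast
    ultimately have "{u, ?z} \<notin> ext (u # t)" unfolding t(11) by (metis doubleton_eq_iff insertE singletonD)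
    moreover have "{u, ?z} \<in> E" using assms(1) t(5) z \<open>?z \<noteq> u\<close> by blast
    moreover have "{u, ?z} \<in> pairs (set (u # t))" using z \<open>?z \<noteq> u\<close> unfolding pairs_def by auto
    ultimately have "has_chord E (u # t)" unfolding has_chord_def by blast
    then show ?thesis using t(1) has_chord_rotate by metis
  qed
qed

lemma chordal_empty: "chordal {} E"
  by (auto simp: chordal_def is_cycle_def)

lemma pe_Cons_sub: "pe (w # ws) \<subseteq> insert {w, hd ws} (pe ws)"
  by (cases ws) auto

lemma chordal_path:
  assumes "distinct ws" "\<And>a b. a \<in> set ws \<Longrightarrow> b \<in> set ws \<Longrightarrow> a \<noteq> b \<Longrightarrow> {a, b} \<in> E \<Longrightarrow> {a, b} \<in> pe ws"
  shows "chordal (set ws) E"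
  using assms
proof (induction ws)
  case Nil then show ?case by (simp add: chordal_empty)
next
  case (Cons w ws)
  have IH: "chordal (set ws) E"
  proof (rule Cons.IH)
    show "distinct ws" using Cons.prems by simp
    fix a b assume ab: "a \<in> set ws" "b \<in> set ws" "a \<noteq> b" "{a, b} \<in> E"
    then have "{a, b} \<in> pe (w # ws)" using Cons.prems(2) by simp
    moreover have "w \<notin> {a, b}" using ab Cons.prems(1) by auto
    ultimately show "{a, b} \<in> pe ws" using pe_Cons_sub[of w ws] by blast
  qed
  have "simplicial (set (w # ws)) E w" unfolding simplicial_def
  proof (intro allI impI)
    fix a b assume ab: "a \<in> set (w # ws)" "b \<in> set (w # ws)" "a \<noteq> b" "a \<noteq> w" "b \<noteq> w" "{w, a} \<in> E" "{w, b} \<in> E"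
    have "{w, a} \<in> pe (w # ws)" "{w, b} \<in> pe (w # ws)" using ab Cons.prems(2) by simp_all
    moreover have "w \<notin> set ws" using Cons.prems(1) by simp
    ultimately have "{w, a} \<notin> pe ws" "{w, b} \<notin> pe ws" "{w, a} \<in> insert {w, hd ws} (pe ws)" "{w, b} \<in> insert {w, hd ws} (pe ws)"
      using pe_not_mem[of w ws] pe_Cons_sub[of w ws] by blast+
    then have "{w, a} = {w, hd ws}" "{w, b} = {w, hd ws}" by blast+
    then have "a = hd ws" "b = hd ws" using ab(4,5) by (metis doubleton_eq_iff)+
    then show "{a, b} \<in> E" using ab by simp
  qed
  moreover have "set (w # ws) - {w} = set ws" using Cons.prems by auto
  ultimately show ?case using chordal_simplicial IH by metis
qed




lemma finite_pairs: "finite S \<Longrightarrow> finite (pairs S)"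
  by (rule finite_subset[of _ "Pow S"]) (auto simp: pairs_def)

lemma finite_int_edges: "finite (int_edges cs)"
  unfolding int_edges_def by (intro finite_Diff finite_pairs) simp

lemma pairs_subset: "p \<in> pairs S \<Longrightarrow> p \<subseteq> S"
  unfolding pairs_def by blast

lemma pairs_sub2: "p \<in> pairs S \<Longrightarrow> p \<subseteq> {u, w} \<Longrightarrow> p = {u, w}"
proof -
  assume p: "p \<in> pairs S" "p \<subseteq> {u, w}"
  then obtain a b where ab: "p = {a, b}" "a \<noteq> b" unfolding pairs_def by blast
  then have "a \<in> {u, w}" "b \<in> {u, w}" using p(2) by auto
  then show "p = {u, w}" using ab by auto
qed

lemma split_chord:
  assumes d: "distinct (u # A @ w # B)"
  shows "ext (u # A @ w # B) = pe (u # A @ [w]) \<union> pe (w # B @ [u])"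
    "ext (u # A @ [w]) = insert {u, w} (pe (u # A @ [w]))"
    "ext (w # B @ [u]) = insert {u, w} (pe (w # B @ [u]))"
    "set (u # A @ [w]) \<inter> set (w # B @ [u]) = {u, w}"
proof -
  have "ext (u # A @ w # B) = pe ((u # A) @ w # (B @ [u]))" by (simp add: ext_Cons)
  then show "ext (u # A @ w # B) = pe (u # A @ [w]) \<union> pe (w # B @ [u])" using pe_append[of "u # A" w "B @ [u]"] by simp
  have "ext (u # A @ [w]) = pe ((u # A) @ w # [u])" by (simp add: ext_Cons)
  moreover have "pe [w, u] = {{u, w}}" by (simp add: insert_commute)
  ultimately show "ext (u # A @ [w]) = insert {u, w} (pe (u # A @ [w]))" using pe_append[of "u # A" w "[u]"] by simp
  have "ext (w # B @ [u]) = pe ((w # B) @ u # [w])" by (simp add: ext_Cons)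
  moreover have "pe [u, w] = {{u, w}}" by simp
  ultimately show "ext (w # B @ [u]) = insert {u, w} (pe (w # B @ [u]))" using pe_append[of "w # B" u "[w]"] by simp
  show "set (u # A @ [w]) \<inter> set (w # B @ [u]) = {u, w}" using d by auto
qed

lemma int_sub_split:
  assumes eq: "ext cs = P1 \<union> P2" "ext C1 = insert e P1" "set C1 \<inter> set C2 = {u, w}" "e = {u, w}"
    and sub: "set C1 \<subseteq> set cs" "\<And>p. p \<in> P2 \<Longrightarrow> p \<subseteq> set C2"
  shows "int_edges C1 \<subseteq> int_edges cs"
proof
  fix p assume p: "p \<in> int_edges C1"
  then have pp: "p \<in> pairs (set C1)" "p \<notin> ext C1" unfolding int_edges_def by auto
  have "p \<in> pairs (set cs)" using pp(1) sub(1) unfolding pairs_def by blast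
  moreover have "p \<notin> ext cs"
  proof
    assume "p \<in> ext cs"
    then consider "p \<in> P1" | "p \<in> P2" using eq(1) by blast
    then show False
    proof cases
      case 1 then show ?thesis using pp eq(2) by blast
    next
      case 2
      then have "p \<subseteq> set C2" using sub(2) by blast
      moreover have "p \<subseteq> set C1" using pp(1) unfolding pairs_def by blast
      ultimately have "p \<subseteq> {u, w}" using eq(3) by blast
      then have "p = e" using pairs_sub2[OF pp(1)] eq(4) by blast
      then show ?thesis using pp eq(2) by blast
    qed
  qed
  ultimately show "p \<in> int_edges cs" unfolding int_edges_def by blast
qed

lemma chord_count:
  assumes ch: "chordal V E'"
  shows "is_cycle V E' cs \<Longrightarrow> length cs - 3 \<le> card (int_edges cs \<inter> E')"
proof (induction "length cs" arbitrary: cs rule: less_induct)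
  case less
  show ?case
  proof (cases "length cs \<le> 3")
    case True then show ?thesis by simp
  next
    case False
    then have "has_chord E' cs" using ch less.prems unfolding chordal_def by auto
    then obtain e where e: "e \<in> E'" "e \<in> pairs (set cs)" "e \<notin> ext cs" unfolding has_chord_def by blast
    then obtain u w where uw: "e = {u, w}" "u \<noteq> w" "u \<in> set cs" "w \<in> set cs" unfolding pairs_def by blast
    obtain n t where r: "rotate n cs = u # t" using rotate_head uw(3) by metis
    let ?cs = "u # t"
    have sets: "set ?cs = set cs" "ext ?cs = ext cs" "int_edges ?cs = int_edges cs" "length ?cs = length cs"
      using r ext_rotate int_edges_rotate by (metis set_rotate, metis, metis, metis length_rotate)
    have cyc: "is_cycle V E' ?cs" using less.prems r is_cycle_rotate by metis
    then have dist: "distinct ?cs" "set ?cs \<subseteq> V" "ext ?cs \<subseteq> E'" unfolding is_cycle_ext by blast+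
    have "w \<in> set t" using uw sets(1) by auto
    then obtain A B where t: "t = A @ w # B" by (meson split_list)
    have tne: "t \<noteq> []" using t by simp
    have eh: "ext ?cs = insert {u, hd t} (insert {last t, u} (pe t))" by (rule ext_head[OF tne])
    have An: "A \<noteq> []"
    proof
      assume "A = []"
      then have "e \<in> ext ?cs" using eh t uw(1) by simp
      then show False using e(3) sets(2) by simp
    qed
    have Bn: "B \<noteq> []"
    proof
      assume "B = []"
      then have "e \<in> ext ?cs" using eh t uw(1) by (auto simp: insert_commute)
      then show False using e(3) sets(2) by simp
    qed
    let ?C1 = "u # A @ [w]" and ?C2 = "w # B @ [u]"
    have d: "distinct (u # A @ w # B)" using dist(1) t by simp
    note sp = split_chord[OF d]
    have ecs: "ext ?cs = pe ?C1 \<union> pe ?C2" using sp(1) t by simp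
    have s1: "set ?C1 \<subseteq> set ?cs" "set ?C2 \<subseteq> set ?cs" using t by auto
    have lens: "length ?cs = length A + length B + 2" "length ?C1 = length A + 2" "length ?C2 = length B + 2"
      using t by auto
    have c1: "is_cycle V E' ?C1" unfolding is_cycle_ext
    proof (intro conjI)
      show "3 \<le> length ?C1" using An by (cases A) auto
      show "distinct ?C1" using d by auto
      show "set ?C1 \<subseteq> V" using s1 dist(2) by blast
      show "ext ?C1 \<subseteq> E'" unfolding sp(2) using ecs dist(3) e(1) uw(1) by blast
    qed
    have c2: "is_cycle V E' ?C2" unfolding is_cycle_ext
    proof (intro conjI)
      show "3 \<le> length ?C2" using Bn by (cases B) auto
      show "distinct ?C2" using d by auto
      show "set ?C2 \<subseteq> V" using s1 dist(2) by blast
      show "ext ?C2 \<subseteq> E'" unfolding sp(3) using ecs dist(3) e(1) uw(1) by blast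
    qed
    have "length B \<noteq> 0" "length A \<noteq> 0" using An Bn by simp_all
    then have "length ?C1 < length cs" "length ?C2 < length cs" using lens sets(4) by linarith+
    then have IH1: "length ?C1 - 3 \<le> card (int_edges ?C1 \<inter> E')"
      and IH2: "length ?C2 - 3 \<le> card (int_edges ?C2 \<inter> E')"
      using less.hyps c1 c2 by blast+
    have i1: "int_edges ?C1 \<subseteq> int_edges ?cs"
      by (rule int_sub_split[OF ecs sp(2) sp(4) refl s1(1)]) (use pe_sub_set in blast)
    have i2: "int_edges ?C2 \<subseteq> int_edges ?cs"
    proof (rule int_sub_split[of _ "pe ?C2" "pe ?C1" _ "{u,w}" ?C1 u w])
      show "ext ?cs = pe ?C2 \<union> pe ?C1" using ecs by blast
      show "ext ?C2 = insert {u, w} (pe ?C2)" by (rule sp(3))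
      show "set ?C2 \<inter> set ?C1 = {u, w}" using sp(4) by blast
    qed (use s1 pe_sub_set in blast)+
    have disj: "int_edges ?C1 \<inter> int_edges ?C2 = {}"
    proof (rule ccontr)
      assume "int_edges ?C1 \<inter> int_edges ?C2 \<noteq> {}"
      then obtain p where p: "p \<in> int_edges ?C1" "p \<in> int_edges ?C2" by blast
      then have pp: "p \<in> pairs (set ?C1)" "p \<in> pairs (set ?C2)" "p \<notin> ext ?C1"
        unfolding int_edges_def by blast+
      then have "p \<subseteq> set ?C1" "p \<subseteq> set ?C2" using pairs_subset by blast+
      then have "p \<subseteq> {u, w}" using sp(4) by blast
      then have "p = {u, w}" using pairs_sub2[OF pp(1)] by blast
      then have "p \<in> ext ?C1" using sp(2) by simp
      then show False using pp(3) by blast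
    qed
    have eC1: "e \<in> ext ?C1" "e \<in> ext ?C2" using sp(2,3) uw(1) by simp_all
    have eC: "e \<notin> int_edges ?C1" "e \<notin> int_edges ?C2" "e \<in> int_edges cs"
      using eC1 e(2,3) unfolding int_edges_def by blast+
    let ?X1 = "int_edges ?C1 \<inter> E'" and ?X2 = "int_edges ?C2 \<inter> E'"
    have fin: "finite ?X1" "finite ?X2" using finite_int_edges by blast+
    have dX: "?X1 \<inter> ?X2 = {}" using disj by blast
    have "card (insert e (?X1 \<union> ?X2)) = card (?X1 \<union> ?X2) + 1"
      using fin eC by simp
    also have "card (?X1 \<union> ?X2) = card ?X1 + card ?X2" using card_Un_disjoint[OF fin dX] .
    finally have cc: "card (insert e (?X1 \<union> ?X2)) = card ?X1 + card ?X2 + 1" .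
    have "insert e (?X1 \<union> ?X2) \<subseteq> int_edges cs \<inter> E'" using i1 i2 eC e(1) sets(3) by blast
    then have "card (insert e (?X1 \<union> ?X2)) \<le> card (int_edges cs \<inter> E')"
      by (intro card_mono) (simp_all add: finite_int_edges)
    then have "card ?X1 + card ?X2 + 1 \<le> card (int_edges cs \<inter> E')" using cc by simp
    moreover have "length A \<ge> 1" "length B \<ge> 1" using An Bn by (simp_all add: Suc_leI)
    ultimately show ?thesis using IH1 IH2 lens sets(4) by linarith
  qed
qed




locale setting =
  fixes V :: "'a set" and E :: "'a set set" and cs :: "'a list" and idx :: "'n::finite \<Rightarrow> 'a set"
  assumes sg: "simple_graph V E" and dist: "distinct cs" and sub: "set cs \<subseteq> V" and len: "length cs \<ge> 4"
    and intE: "int_edges cs \<inter> E = {}"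
    and bij: "bij_betw idx UNIV (nonedges (set cs) (induced_edges E (set cs)))"
begin

abbreviation "V0 \<equiv> set cs"
abbreviation "EH \<equiv> induced_edges E (set cs)"
abbreviation "N \<equiv> nonedges (set cs) (induced_edges E (set cs))"
abbreviation "I \<equiv> int_edges cs"
abbreviation "Fe \<equiv> F_edges E cs"
abbreviation "k \<equiv> length cs"

definition vec :: "'a set set \<Rightarrow> real ^ 'n" where
  "vec S = (\<chi> i. if idx i \<in> S then 1 else 0)"

lemma inj_idx: "inj idx" using bij bij_betw_imp_inj_on by blast
lemma range_idx: "range idx = N" using bij bij_betw_imp_surj_on by blast

lemma ext_pairs: "ext cs \<subseteq> pairs V0"
proof
  fix e assume "e \<in> ext cs"
  then obtain i where i: "e = {cs ! i, cs ! ((i + 1) mod k)}" "i < k" unfolding ext_def by blast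
  have "0 < k" using len by linarith
  then have j: "(i + 1) mod k < k" by simp
  have "i \<noteq> (i + 1) mod k"
  proof (cases "i + 1 < k")
    case True then show ?thesis by simp
  next
    case False then have "i + 1 = k" using i by simp
    then show ?thesis using len by simp
  qed
  then have "cs ! i \<noteq> cs ! ((i + 1) mod k)" using nth_eq_iff_index_eq[OF dist i(2) j] by simp
  moreover have "cs ! i \<in> V0" "cs ! ((i + 1) mod k) \<in> V0" using i j by simp_all
  ultimately show "e \<in> pairs V0" unfolding pairs_def using i(1) by blast
qed

lemma EH_sub_pairs: "EH \<subseteq> pairs V0"
proof
  fix e assume e: "e \<in> EH"
  then have "e \<in> E" "e \<subseteq> V0" unfolding induced_edges_def by auto
  then obtain u v where "e = {u, v}" "u \<noteq> v" using sg unfolding simple_graph_def by blast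
  then show "e \<in> pairs V0" using \<open>e \<subseteq> V0\<close> unfolding pairs_def by auto
qed

lemma EH_eq: "EH = pairs V0 \<inter> E"
  using EH_sub_pairs unfolding induced_edges_def using pairs_subset by blast

lemma pairs_eq: "pairs V0 = ext cs \<union> I"
  using ext_pairs unfolding int_edges_def by blast

lemma I_E: "I \<inter> EH = {}" using intE EH_eq by blast

lemma EH_ext: "EH \<subseteq> ext cs" using EH_eq pairs_eq intE by blast

lemma N_eq: "N = I \<union> Fe"
  unfolding nonedges_def F_edges_def using EH_eq pairs_eq intE by blast

lemma I_Fe: "I \<inter> Fe = {}"
  unfolding int_edges_def F_edges_def by blast

lemma EH_Fe1: "EH \<union> Fe = ext cs"
  unfolding F_edges_def using EH_eq pairs_eq ext_pairs intE by blast
lemma EH_Fe2: "EH \<inter> Fe = {}"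
  unfolding F_edges_def using EH_eq by blast

lemma EH_N: "EH \<inter> N = {}" "pairs V0 \<subseteq> EH \<union> N"
  unfolding nonedges_def by blast+

lemma finN: "finite N"
proof (rule finite_subset)
  show "N \<subseteq> pairs V0" unfolding nonedges_def by blast
  show "finite (pairs V0)" by (rule finite_pairs) simp
qed

lemma idx_preimage: assumes "B \<subseteq> N" shows "idx ` {i. idx i \<in> B} = B"
proof
  show "idx ` {i. idx i \<in> B} \<subseteq> B" by auto
  show "B \<subseteq> idx ` {i. idx i \<in> B}"
  proof
    fix x assume x: "x \<in> B"
    then have "x \<in> range idx" using assms range_idx by auto
    then obtain i where "x = idx i" by auto
    then show "x \<in> idx ` {i. idx i \<in> B}" using x by auto
  qed
qed

lemma card_preimage: assumes "B \<subseteq> N" shows "card {i. idx i \<in> B} = card B"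
proof -
  have "inj_on idx {i. idx i \<in> B}" using inj_idx by (rule inj_on_subset) simp
  then have "card (idx ` {i. idx i \<in> B}) = card {i. idx i \<in> B}" by (rule card_image)
  then show ?thesis using idx_preimage[OF assms] by simp
qed

lemma vec_ones: assumes "S \<subseteq> N" shows "{idx i | i. vec S $ i = 1} = S"
proof
  show "{idx i | i. vec S $ i = 1} \<subseteq> S" unfolding vec_def by auto
  show "S \<subseteq> {idx i | i. vec S $ i = 1}"
  proof
    fix x assume "x \<in> S"
    then have "x \<in> range idx" using assms range_idx by auto
    then obtain i where "x = idx i" by blast
    then show "x \<in> {idx i | i. vec S $ i = 1}" using \<open>x \<in> S\<close> unfolding vec_def by auto
  qed
qed

lemma vec_01: "vec S $ i \<in> {0, 1}" by (simp add: vec_def)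

lemma vec_in_X: assumes "S \<subseteq> N" shows "vec S \<in> Xset V0 EH idx \<longleftrightarrow> chordal V0 (EH \<union> S)"
proof -
  have "vec S \<in> Xset V0 EH idx \<longleftrightarrow> (\<forall>i. vec S $ i \<in> {0, 1}) \<and> chordal V0 (EH \<union> {idx i | i. vec S $ i = 1})"
    unfolding Xset_def by (rule mem_Collect_eq)
  then show ?thesis using vec_01 vec_ones[OF assms] by simp
qed

lemma sum_vec: "A \<subseteq> N \<Longrightarrow> (\<Sum>i | idx i \<in> A. vec S $ i) = real (card (A \<inter> S))"
proof -
  assume A: "A \<subseteq> N"
  have "(\<Sum>i | idx i \<in> A. vec S $ i) = (\<Sum>i | idx i \<in> A. if idx i \<in> S then 1 else 0)"
    unfolding vec_def by simp
  also have "\<dots> = (\<Sum>i\<in>{i \<in> {i. idx i \<in> A}. idx i \<in> S}. 1)"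
    by (rule sum.inter_filter[symmetric]) simp
  also have "\<dots> = real (card {i. idx i \<in> A \<and> idx i \<in> S})" by simp
  also have "{i. idx i \<in> A \<and> idx i \<in> S} = {i. idx i \<in> A \<inter> S}" by blast
  also have "card \<dots> = card (A \<inter> S)" using A by (intro card_preimage) blast
  finally show ?thesis .
qed

definition g :: "real ^ 'n \<Rightarrow> real" where
  "g x = (\<Sum>i | idx i \<in> I. x $ i) - (real k - 3) * ((\<Sum>i | idx i \<in> Fe. x $ i) - real (card Fe) + 1)"

lemma I_N: "I \<subseteq> N" and Fe_N: "Fe \<subseteq> N" using N_eq by blast+

lemma g_vec: "g (vec S) = real (card (I \<inter> S)) - (real k - 3) * (real (card (Fe \<inter> S)) - real (card Fe) + 1)"
  unfolding g_def using sum_vec I_N Fe_N by simp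

definition avec :: "real ^ 'n" where
  "avec = (\<chi> i. (if idx i \<in> I then 1 else 0) - (real k - 3) * (if idx i \<in> Fe then 1 else 0))"

definition cst :: real where "cst = (real k - 3) * (real (card Fe) - 1)"

lemma aux_alg: "(a::real) = s1 - c * s2 \<Longrightarrow> s1 - c * (s2 - f + 1) = a + c * (f - 1)"
  by (simp add: algebra_simps)

lemma g_inner: "g x = avec \<bullet> x + cst"
proof -
  have "avec \<bullet> x = (\<Sum>i\<in>UNIV. ((if idx i \<in> I then 1 else 0) - (real k - 3) * (if idx i \<in> Fe then 1 else 0)) * x $ i)"
    unfolding avec_def inner_vec_def by simp
  also have "\<dots> = (\<Sum>i\<in>UNIV. (if idx i \<in> I then x $ i else 0)) - (real k - 3) * (\<Sum>i\<in>UNIV. (if idx i \<in> Fe then x $ i else 0))"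
  proof -
    have "\<And>i. ((if idx i \<in> I then 1 else 0) - (real k - 3) * (if idx i \<in> Fe then 1 else 0)) * x $ i
       = (if idx i \<in> I then x $ i else 0) - (real k - 3) * (if idx i \<in> Fe then x $ i else 0)"
      by (simp add: algebra_simps)
    then show ?thesis by (simp add: sum_subtractf sum_distrib_left)
  qed
  also have "(\<Sum>i\<in>UNIV. (if idx i \<in> I then x $ i else 0)) = (\<Sum>i | idx i \<in> I. x $ i)"
    by (rule sum.inter_filter[of UNIV, simplified, symmetric]) simp
  also have "(\<Sum>i\<in>UNIV. (if idx i \<in> Fe then x $ i else 0)) = (\<Sum>i | idx i \<in> Fe. x $ i)"
    by (rule sum.inter_filter[of UNIV, simplified, symmetric]) simp
  finally have "avec \<bullet> x = (\<Sum>i | idx i \<in> I. x $ i) - (real k - 3) * (\<Sum>i | idx i \<in> Fe. x $ i)" .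
  then show ?thesis unfolding g_def cst_def by (rule aux_alg)
qed

lemma vec_insert: "c \<notin> S \<Longrightarrow> vec (insert c S) = vec S + vec {c}"
  unfolding vec_def by (simp add: vec_eq_iff)

lemma vec_Un: "A \<inter> B = {} \<Longrightarrow> vec (A \<union> B) = vec A + vec B"
  unfolding vec_def by (auto simp: vec_eq_iff)

lemma vec_empty: "vec {} = 0"
  unfolding vec_def by (simp add: vec_eq_iff)

lemma vec_axis: "vec {idx i} = axis i 1"
  unfolding vec_def axis_def using inj_idx by (auto simp: vec_eq_iff inj_eq)

end



context setting begin

definition s :: "'a \<Rightarrow> 'a set" where "s y = {z. {y, z} \<in> ext cs}"
definition Fan :: "'a \<Rightarrow> 'a set set" where "Fan v = {c \<in> I. v \<in> c}"

lemma rot: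
  assumes "rotate n cs = y # t"
  shows "distinct (y # t)" "set (y # t) = V0" "Suc (length t) = k" "ext cs = ext (y # t)"
    "t \<noteq> []" "3 \<le> length t" "hd t \<noteq> last t" "y \<notin> set t" "distinct t"
    "ext cs = insert {y, hd t} (insert {last t, y} (pe t))" "hd t \<in> set t" "last t \<in> set t"
proof -
  show d: "distinct (y # t)" using dist assms by (metis distinct_rotate)
  show "set (y # t) = V0" using assms by (metis set_rotate)
  have "length (rotate n cs) = k" by simp
  then show l: "Suc (length t) = k" using assms by simp
  show e: "ext cs = ext (y # t)" using assms ext_rotate by metis
  show l3: "3 \<le> length t" using l len by linarith
  then show tne: "t \<noteq> []" by auto
  show dt: "distinct t" using d by simp
  show "hd t \<noteq> last t"
    using nth_eq_iff_index_eq[OF dt, of 0 "length t - 1"] l3 tne by (simp add: hd_conv_nth[OF tne] last_conv_nth[OF tne])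
  show "y \<notin> set t" using d by simp
  show "ext cs = insert {y, hd t} (insert {last t, y} (pe t))" using e ext_head[OF tne] by simp
  show "hd t \<in> set t" "last t \<in> set t" using tne by simp_all
qed

lemma rot_ex: "y \<in> V0 \<Longrightarrow> \<exists>n t. rotate n cs = y # t"
  by (rule rotate_head)

lemma s_head:
  assumes r: "rotate n cs = y # t"
  shows "s y = {hd t, last t}"
proof -
  note R = rot[OF r]
  show ?thesis
  proof (intro equalityI subsetI)
    fix z assume "z \<in> s y"
    then have z: "{y, z} \<in> insert {y, hd t} (insert {last t, y} (pe t))" unfolding s_def using R(10) by simp
    have "{y, z} \<notin> pe t" using pe_not_mem[OF R(8)] by blast
    then have "{y, z} = {y, hd t} \<or> {y, z} = {last t, y}" using z by blast
    moreover have "hd t \<noteq> y" "last t \<noteq> y" using R(8,11,12) by auto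
    ultimately show "z \<in> {hd t, last t}" by (auto simp: doubleton_eq_iff)
  next
    fix z assume "z \<in> {hd t, last t}"
    then have "{y, z} = {y, hd t} \<or> {y, z} = {last t, y}" by auto
    then show "z \<in> s y" unfolding s_def using R(10) by auto
  qed
qed

lemma s_props:
  assumes y: "y \<in> V0"
  shows "s y \<in> I" "y \<notin> s y"
proof -
  obtain n t where r: "rotate n cs = y # t" using rot_ex[OF y] by blast
  note R = rot[OF r]
  have sy: "s y = {hd t, last t}" by (rule s_head[OF r])
  show "y \<notin> s y" using sy R(8,11,12) by auto
  have "s y \<in> pairs V0" unfolding sy pairs_def using R(2,7,11,12) by auto
  moreover have "s y \<notin> ext cs"
  proof -
    have "y \<notin> {hd t, last t}" using R(8,11,12) by auto
    then have "{hd t, last t} \<noteq> {y, hd t}" "{hd t, last t} \<noteq> {last t, y}" by blast+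
    then show ?thesis unfolding R(10) sy using endpoints_not_pe[OF R(9) R(6)] by blast
  qed
  ultimately show "s y \<in> I" unfolding int_edges_def by blast
qed

lemma consec_s: assumes "j + 1 < k" shows "cs ! (j + 1) \<in> s (cs ! j)"
proof -
  have "{cs ! j, cs ! ((j + 1) mod k)} \<in> ext cs" unfolding ext_def using assms by auto
  then show ?thesis unfolding s_def using assms by simp
qed

lemma pair_in_I: "c \<in> I \<Longrightarrow> \<exists>a b. c = {a, b} \<and> a \<noteq> b \<and> a \<in> V0 \<and> b \<in> V0"
  unfolding int_edges_def pairs_def by blast

lemma Fan_char:
  assumes r: "rotate n cs = v # t"
  shows "Fan v = (\<lambda>z. {v, z}) ` (set t - {hd t, last t})"
proof -
  note R = rot[OF r]
  show ?thesis
  proof (intro equalityI subsetI)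
    fix c assume c: "c \<in> Fan v"
    then have cI: "c \<in> I" "v \<in> c" unfolding Fan_def by auto
    then obtain a b where ab: "c = {a, b}" "a \<noteq> b" "a \<in> V0" "b \<in> V0" using pair_in_I by blast
    obtain z where z: "c = {v, z}" "z \<noteq> v" "z \<in> V0" using ab cI(2) by (metis insert_commute insertE singletonD)
    have zt: "z \<in> set t" using z R(2) by auto
    have "c \<notin> ext cs" using cI(1) unfolding int_edges_def by blast
    then have "z \<noteq> hd t" "z \<noteq> last t" unfolding R(10) z(1) by (auto simp: insert_commute)
    then show "c \<in> (\<lambda>z. {v, z}) ` (set t - {hd t, last t})" using z(1) zt by blast
  next
    fix c assume "c \<in> (\<lambda>z. {v, z}) ` (set t - {hd t, last t})"
    then obtain z where z: "c = {v, z}" "z \<in> set t" "z \<noteq> hd t" "z \<noteq> last t" by blast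
    have zv: "z \<noteq> v" using z(2) R(8) by auto
    have "c \<in> pairs V0" unfolding pairs_def z(1) using zv z(2) R(2) by auto
    moreover have "c \<notin> ext cs"
    proof -
      have "c \<notin> pe t" using pe_not_mem[OF R(8)] z(1) by blast
      moreover have "c \<noteq> {v, hd t}" "c \<noteq> {last t, v}" using z zv by (auto simp: doubleton_eq_iff)
      ultimately show ?thesis unfolding R(10) by blast
    qed
    ultimately show "c \<in> Fan v" unfolding Fan_def int_edges_def z(1) by blast
  qed
qed

lemma Fan_I: "Fan v \<subseteq> I" unfolding Fan_def by blast

lemma card_Fan: assumes v: "v \<in> V0" shows "card (Fan v) = k - 3"
proof -
  obtain n t where r: "rotate n cs = v # t" using rot_ex[OF v] by blast
  note R = rot[OF r]
  have inj: "inj_on (\<lambda>z. {v, z}) (set t - {hd t, last t})"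
    unfolding inj_on_def using R(8) by (auto simp: doubleton_eq_iff)
  have "card (Fan v) = card (set t - {hd t, last t})" unfolding Fan_char[OF r] by (rule card_image[OF inj])
  also have "\<dots> = card (set t) - card {hd t, last t}" by (rule card_Diff_subset) (use R(11,12) in auto)
  also have "\<dots> = length t - 2" using R(7,9) by (simp add: distinct_card)
  finally show ?thesis using R(3) by simp
qed

lemma ins2: "x \<in> insert a (insert b S) \<Longrightarrow> x \<noteq> a \<Longrightarrow> x \<noteq> b \<Longrightarrow> x \<in> S"
  by simp

lemma Fan_contains: "c \<in> Fan v \<Longrightarrow> v \<in> c" unfolding Fan_def by blast

lemma chordal_fan:
  assumes v: "v \<in> V0"
  shows "chordal V0 (ext cs \<union> Fan v)"
proof -
  obtain n t where r: "rotate n cs = v # t" using rot_ex[OF v] by blast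
  note R = rot[OF r]
  let ?G = "ext cs \<union> Fan v"
  have V0t: "V0 - {v} = set t" using R(2,8) by auto
  have path: "chordal (set t) ?G"
  proof (rule chordal_path[OF R(9)])
    fix a b assume ab: "a \<in> set t" "b \<in> set t" "a \<noteq> b" "{a, b} \<in> ?G"
    have nv: "v \<notin> {a, b}" using ab R(8) by auto
    then have "{a, b} \<notin> Fan v" using Fan_contains by blast
    then have "{a, b} \<in> ext cs" using ab(4) by blast
    moreover have "{a, b} \<noteq> {v, hd t}" "{a, b} \<noteq> {last t, v}" using nv by blast+
    ultimately show "{a, b} \<in> pe t" unfolding R(10) by blast
  qed
  show ?thesis
  proof (rule chordal_universal[of V0 v])
    fix a assume a: "a \<in> V0" "a \<noteq> v"
    then have at: "a \<in> set t" using V0t by blast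
    show "{v, a} \<in> ?G"
    proof (cases "a = hd t \<or> a = last t")
      case True then show ?thesis unfolding R(10) by (auto simp: insert_commute)
    next
      case False
      then have "{v, a} \<in> Fan v" unfolding Fan_char[OF r] using at by blast
      then show ?thesis by blast
    qed
  next
    show "chordal (V0 - {v}) ?G" using path V0t by simp
  qed
qed

lemma s_split:
  assumes r: "rotate n cs = v # A @ y # B" and that: "A \<noteq> []" "B \<noteq> []"
  shows "s y = {last A, hd B}"
proof -
  have "rotate (length (v # A)) (rotate n cs) = (y # B) @ (v # A)"
    unfolding r using rotate_append[of "v # A" "y # B"] by simp
  then have "rotate (length (v # A) + n) cs = y # (B @ v # A)" by (simp add: rotate_rotate)
  then have "s y = {hd (B @ v # A), last (B @ v # A)}" by (rule s_head)
  then show ?thesis using that by (simp add: insert_commute)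
qed

lemma pe_mid:
  assumes "A \<noteq> []" "B \<noteq> []"
  shows "pe (A @ y # B) = insert {last A, y} (insert {y, hd B} (pe A \<union> pe B))"
    "pe (A @ B) = insert {last A, hd B} (pe A \<union> pe B)"
proof -
  have "pe (A @ y # B) = pe (A @ [y]) \<union> pe (y # B)" by (rule pe_append)
  moreover have "pe (A @ [y]) = insert {last A, y} (pe A)" by (rule pe_snoc[OF assms(1)])
  moreover have "pe (y # B) = insert {y, hd B} (pe B)" using assms(2) by (cases B) auto
  ultimately show "pe (A @ y # B) = insert {last A, y} (insert {y, hd B} (pe A \<union> pe B))" by auto
  obtain b B' where B: "B = b # B'" using assms(2) by (cases B) auto
  have "pe (A @ b # B') = pe (A @ [b]) \<union> pe (b # B')" by (rule pe_append)
  moreover have "pe (A @ [b]) = insert {last A, b} (pe A)" by (rule pe_snoc[OF assms(1)])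
  ultimately show "pe (A @ B) = insert {last A, hd B} (pe A \<union> pe B)" using B by auto
qed

lemma flip_setup:
  assumes vy: "{v, y} \<in> I"
  obtains n A B where "rotate n cs = v # A @ y # B" "A \<noteq> []" "B \<noteq> []" "v \<noteq> y" "v \<in> V0" "y \<in> V0"
proof -
  obtain a b where ab: "{v, y} = {a, b}" "a \<noteq> b" "a \<in> V0" "b \<in> V0" using pair_in_I[OF vy] by blast
  have vyne: "v \<noteq> y" using ab(1,2) by (auto simp: doubleton_eq_iff)
  have vV: "v \<in> V0" "y \<in> V0" using ab by (auto simp: doubleton_eq_iff)
  obtain n t where r: "rotate n cs = v # t" using rot_ex[OF vV(1)] by blast
  note R = rot[OF r]
  have "y \<in> set t" using R(2) vV(2) vyne by auto
  then obtain A B where t: "t = A @ y # B" by (meson split_list)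
  have ne: "{v, y} \<notin> ext cs" using vy unfolding int_edges_def by blast
  have "A \<noteq> []"
  proof
    assume "A = []" then have "hd t = y" using t by simp
    then show False using ne R(10) by auto
  qed
  moreover have "B \<noteq> []"
  proof
    assume "B = []" then have "last t = y" using t by simp
    then show False using ne R(10) by (auto simp: insert_commute)
  qed
  ultimately show ?thesis using that r t vyne vV by blast
qed

lemma chordal_flip:
  assumes vy: "{v, y} \<in> I"
  shows "chordal V0 (ext cs \<union> (Fan v - {{v, y}}) \<union> {s y})"
proof -
  obtain n A B where r: "rotate n cs = v # A @ y # B" and AB: "A \<noteq> []" "B \<noteq> []"
    and vyne: "v \<noteq> y" and vV: "v \<in> V0" "y \<in> V0"
    using flip_setup[OF vy] by blast
  note R = rot[OF r]
  let ?G = "ext cs \<union> (Fan v - {{v, y}}) \<union> {s y}"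
  have sy: "s y = {last A, hd B}" by (rule s_split[OF r AB])
  have dAB: "distinct (v # A @ y # B)" using R(1) .
  have lA: "last A \<in> set A" "hd B \<in> set B" using AB by simp_all
  have lAhB: "last A \<noteq> hd B" using dAB lA by auto
  have ht: "hd (A @ y # B) = hd A" "last (A @ y # B) = last B" using AB by simp_all
  have pet: "pe (A @ y # B) = insert {last A, y} (insert {y, hd B} (pe A \<union> pe B))"
    and peAB: "pe (A @ B) = insert {last A, hd B} (pe A \<union> pe B)" using pe_mid[OF AB] by blast+
  have setV: "V0 = insert v (insert y (set (A @ B)))" using R(2) by auto
  have path: "chordal (set (A @ B)) ?G"
  proof (rule chordal_path)
    show "distinct (A @ B)" using dAB by auto
    fix a b assume ab: "a \<in> set (A @ B)" "b \<in> set (A @ B)" "a \<noteq> b" "{a, b} \<in> ?G"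
    have nv: "v \<notin> {a, b}" "y \<notin> {a, b}" using ab dAB by auto
    have "{a, b} \<notin> Fan v - {{v, y}}" using Fan_contains nv(1) by blast
    then consider "{a, b} \<in> ext cs" | "{a, b} = s y" using ab(4) by blast
    then show "{a, b} \<in> pe (A @ B)"
    proof cases
      case 1
      have n1: "{a, b} \<noteq> {v, hd (A @ y # B)}" "{a, b} \<noteq> {last (A @ y # B), v}" using nv(1) by blast+
      have "{a, b} \<in> insert {v, hd (A @ y # B)} (insert {last (A @ y # B), v} (pe (A @ y # B)))"
        using 1 R(10) by argo
      then have "{a, b} \<in> pe (A @ y # B)" using n1 by (rule ins2)
      then have m: "{a, b} \<in> insert {last A, y} (insert {y, hd B} (pe A \<union> pe B))" using pet by argo
      have "{a, b} \<noteq> {last A, y}" "{a, b} \<noteq> {y, hd B}" using nv(2) by blast+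
      with m have "{a, b} \<in> pe A \<union> pe B" by (rule ins2)
      then show ?thesis unfolding peAB by blast
    next
      case 2 then show ?thesis unfolding peAB sy by blast
    qed
  qed
  have V1: "V0 - {y} - {v} = set (A @ B)" using setV dAB by auto
  have univ: "chordal (V0 - {y}) ?G"
  proof (rule chordal_universal[of "V0 - {y}" v])
    fix a assume a: "a \<in> V0 - {y}" "a \<noteq> v"
    then have at: "a \<in> set (A @ y # B)" "a \<noteq> y" using R(2) by auto
    show "{v, a} \<in> ?G"
    proof (cases "a = hd (A @ y # B) \<or> a = last (A @ y # B)")
      case True
      have "{v, a} \<in> insert {v, hd (A @ y # B)} (insert {last (A @ y # B), v} (pe (A @ y # B)))"
      proof (cases "a = hd (A @ y # B)")
        case True then show ?thesis by simp
      next
        case False then have "a = last (A @ y # B)" using \<open>a = hd (A @ y # B) \<or> a = last (A @ y # B)\<close> by blast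
        then show ?thesis by (simp add: insert_commute)
      qed
      then have "{v, a} \<in> ext cs" using R(10) by argo
      then show ?thesis by blast
    next
      case False
      then have "{v, a} \<in> Fan v" unfolding Fan_char[OF r] using at by blast
      moreover have "{v, a} \<noteq> {v, y}" using at(2) vyne by (auto simp: doubleton_eq_iff)
      ultimately show ?thesis by blast
    qed
  next
    show "chordal (V0 - {y} - {v}) ?G" using path V1 by simp
  qed
  have ys: "y \<notin> s y" using s_props[OF vV(2)] by blast
  have simp_y: "simplicial V0 ?G y" unfolding simplicial_def
  proof (intro allI impI)
    fix a b assume h: "a \<in> V0" "b \<in> V0" "a \<noteq> b" "a \<noteq> y" "b \<noteq> y" "{y, a} \<in> ?G" "{y, b} \<in> ?G"
    have nb: "x \<in> s y" if x: "x \<noteq> y" "{y, x} \<in> ?G" for x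
    proof -
      have "{y, x} \<noteq> s y" using ys by blast
      moreover have "{y, x} \<notin> Fan v - {{v, y}}"
      proof
        assume "{y, x} \<in> Fan v - {{v, y}}"
        then have "v \<in> {y, x}" "{y, x} \<noteq> {v, y}" using Fan_contains by blast+
        then show False using vyne by auto
      qed
      ultimately have "{y, x} \<in> ext cs" using x(2) by blast
      then show ?thesis unfolding s_def by simp
    qed
    have "a \<in> s y" "b \<in> s y" using nb h by blast+
    then have "{a, b} = s y" using h(3) unfolding sy by auto
    then show "{a, b} \<in> ?G" by blast
  qed
  show ?thesis by (rule chordal_simplicial[OF simp_y univ])
qed

lemma chordal_pathpt:
  assumes e: "e \<in> ext cs"
  shows "chordal V0 (ext cs - {e})"
proof -
  have "e \<in> pairs V0" using e ext_pairs by (rule subsetD[rotated])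
  then obtain a b where ab: "e = {a, b}" "a \<noteq> b" "a \<in> V0" unfolding pairs_def by blast
  obtain n t where r: "rotate n cs = a # t" using rot_ex[OF ab(3)] by blast
  note R = rot[OF r]
  have en: "e \<notin> pe t" using pe_not_mem[OF R(8)] ab(1) by blast
  have e2: "e \<in> insert {a, hd t} (insert {last t, a} (pe t))" using e unfolding R(10) .
  then have cases: "e = {a, hd t} \<or> e = {last t, a}" using en by blast
  have sub: "{x, y} \<in> insert {a, hd t} (insert {last t, a} (pe t)) - {e}" if "{x, y} \<in> ext cs - {e}" for x y
    using that unfolding R(10) .
  show ?thesis
  proof (cases "e = {last t, a}")
    case True
    have "chordal (set (a # t)) (ext cs - {e})"
    proof (rule chordal_path[OF R(1)])
      fix x y assume h: "x \<in> set (a # t)" "y \<in> set (a # t)" "x \<noteq> y" "{x, y} \<in> ext cs - {e}"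
      have "{x, y} \<in> insert {a, hd t} (pe t)" using sub[OF h(4)] True by blast
      moreover have "pe (a # t) = insert {a, hd t} (pe t)" using R(5) by (cases t) auto
      ultimately show "{x, y} \<in> pe (a # t)" by simp
    qed
    then show ?thesis using R(2) by simp
  next
    case False
    then have ee: "e = {a, hd t}" using cases by blast
    have d: "distinct (t @ [a])" using R(1) by simp
    have "chordal (set (t @ [a])) (ext cs - {e})"
    proof (rule chordal_path[OF d])
      fix x y assume h: "x \<in> set (t @ [a])" "y \<in> set (t @ [a])" "x \<noteq> y" "{x, y} \<in> ext cs - {e}"
      have "{x, y} \<in> insert {last t, a} (pe t)" using sub[OF h(4)] ee by blast
      then show "{x, y} \<in> pe (t @ [a])" using pe_snoc[OF R(5)] by simp
    qed
    moreover have "set (t @ [a]) = V0" using R(2) by auto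
    ultimately show ?thesis by simp
  qed
qed

end



lemma chordal_complete:
  assumes "finite W" "\<And>a b. a \<in> W \<Longrightarrow> b \<in> W \<Longrightarrow> a \<noteq> b \<Longrightarrow> {a, b} \<in> G"
  shows "chordal W G"
  using assms
proof (induction W rule: finite_induct)
  case empty then show ?case using chordal_empty by blast
next
  case (insert x F)
  have "chordal F G" using insert.IH insert.prems by blast
  moreover have "insert x F - {x} = F" using insert.hyps by blast
  ultimately show ?case using chordal_universal[of "insert x F" x G] insert.prems by auto
qed

context setting begin

lemma real_k3: "real (k - 3) = real k - 3" using len by simp

lemma fan_S: assumes v: "v \<in> V0"
  shows "vec (Fe \<union> Fan v) \<in> Xset V0 EH idx" "g (vec (Fe \<union> Fan v)) = 0"
proof -
  have sub: "Fe \<union> Fan v \<subseteq> N" using Fe_N Fan_I I_N by blast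
  have "EH \<union> (Fe \<union> Fan v) = ext cs \<union> Fan v" using EH_Fe1 by blast
  then show "vec (Fe \<union> Fan v) \<in> Xset V0 EH idx" using vec_in_X[OF sub] chordal_fan[OF v] by simp
  have "I \<inter> (Fe \<union> Fan v) = Fan v" using I_Fe Fan_I by blast
  moreover have "Fe \<inter> (Fe \<union> Fan v) = Fe" by blast
  ultimately show "g (vec (Fe \<union> Fan v)) = 0" unfolding g_vec using card_Fan[OF v] real_k3 by simp
qed

lemma flip_facts: assumes vy: "{v, y} \<in> I"
  shows "v \<in> V0" "y \<in> V0" "v \<noteq> y" "s y \<in> I" "s y \<notin> Fan v" "{v, y} \<in> Fan v"
proof -
  obtain n A B where "rotate n cs = v # A @ y # B" "A \<noteq> []" "B \<noteq> []" and f: "v \<noteq> y" "v \<in> V0" "y \<in> V0"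
    using flip_setup[OF vy] by blast
  show "v \<in> V0" "y \<in> V0" "v \<noteq> y" using f by auto
  show "s y \<in> I" using s_props[OF f(3)] by blast
  have "v \<notin> s y"
  proof
    assume "v \<in> s y"
    then have "{y, v} \<in> ext cs" unfolding s_def by simp
    then have "{v, y} \<in> ext cs" by (simp add: insert_commute)
    then show False using vy unfolding int_edges_def by blast
  qed
  then show "s y \<notin> Fan v" using Fan_contains by blast
  show "{v, y} \<in> Fan v" using vy unfolding Fan_def by blast
qed

lemma flip_S: assumes vy: "{v, y} \<in> I"
  shows "vec (Fe \<union> (Fan v - {{v, y}}) \<union> {s y}) \<in> Xset V0 EH idx"
    "g (vec (Fe \<union> (Fan v - {{v, y}}) \<union> {s y})) = 0"
proof -
  note F = flip_facts[OF vy]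
  let ?S = "Fe \<union> (Fan v - {{v, y}}) \<union> {s y}"
  have sub: "?S \<subseteq> N" using Fe_N Fan_I I_N F(4) by blast
  have "EH \<union> ?S = ext cs \<union> (Fan v - {{v, y}}) \<union> {s y}" using EH_Fe1 by blast
  then show "vec ?S \<in> Xset V0 EH idx" using vec_in_X[OF sub] chordal_flip[OF vy] by simp
  have "I \<inter> ?S = insert (s y) (Fan v - {{v, y}})" using I_Fe Fan_I F(4) by blast
  moreover have "card (insert (s y) (Fan v - {{v, y}})) = k - 3"
  proof -
    have fin: "finite (Fan v)" using Fan_I finite_int_edges finite_subset by blast
    have "card (Fan v - {{v, y}}) = k - 3 - 1" using card_Fan[OF F(1)] F(6) fin by simp
    then show ?thesis using F(5) fin len by simp
  qed
  moreover have "Fe \<inter> ?S = Fe" using I_Fe F(4) by blast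
  ultimately show "g (vec ?S) = 0" unfolding g_vec using real_k3 by simp
qed

lemma path_S: assumes e: "e \<in> Fe"
  shows "vec (Fe - {e}) \<in> Xset V0 EH idx" "g (vec (Fe - {e})) = 0"
proof -
  have sub: "Fe - {e} \<subseteq> N" using Fe_N by blast
  have eext: "e \<in> ext cs" using e unfolding F_edges_def by blast
  have "EH \<union> (Fe - {e}) = ext cs - {e}" using EH_Fe1 EH_Fe2 e by blast
  then show "vec (Fe - {e}) \<in> Xset V0 EH idx" using vec_in_X[OF sub] chordal_pathpt[OF eext] by simp
  have "I \<inter> (Fe - {e}) = {}" using I_Fe by blast
  moreover have "Fe \<inter> (Fe - {e}) = Fe - {e}" by blast
  moreover have finF: "finite Fe" using Fe_N finN finite_subset by blast
  moreover have "card (Fe - {e}) = card Fe - 1" using e finF by simp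
  moreover have "card Fe \<ge> 1" using e finF by (metis One_nat_def Suc_leI card_gt_0_iff empty_iff)
  ultimately show "g (vec (Fe - {e})) = 0" unfolding g_vec by (simp add: of_nat_diff)
qed

lemma full_S: "vec N \<in> Xset V0 EH idx"
proof -
  have "chordal V0 (EH \<union> N)"
  proof (rule chordal_complete)
    show "finite V0" by simp
    fix a b assume "a \<in> V0" "b \<in> V0" "a \<noteq> b"
    then have "{a, b} \<in> pairs V0" unfolding pairs_def by blast
    then show "{a, b} \<in> EH \<union> N" using EH_N(2) by blast
  qed
  then show ?thesis using vec_in_X[of N] by simp
qed

lemma full_minus_S: assumes e: "e \<in> N" shows "vec (N - {e}) \<in> Xset V0 EH idx"
proof -
  let ?G = "EH \<union> (N - {e})"
  have "e \<in> pairs V0" using e unfolding nonedges_def by blast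
  then obtain u w where uw: "e = {u, w}" "u \<noteq> w" "u \<in> V0" unfolding pairs_def by blast
  have inG: "{a, b} \<in> ?G" if "a \<in> V0" "b \<in> V0" "a \<noteq> b" "{a, b} \<noteq> e" for a b
  proof -
    have "{a, b} \<in> pairs V0" using that unfolding pairs_def by blast
    then show ?thesis using EH_N(2) that(4) by blast
  qed
  have "chordal (V0 - {u}) ?G"
  proof (rule chordal_complete)
    show "finite (V0 - {u})" by simp
    fix a b assume "a \<in> V0 - {u}" "b \<in> V0 - {u}" "a \<noteq> b"
    moreover have "{a, b} \<noteq> e" using calculation uw(1) by auto
    ultimately show "{a, b} \<in> ?G" using inG by blast
  qed
  moreover have "simplicial V0 ?G u" unfolding simplicial_def
  proof (intro allI impI)
    fix a b assume h: "a \<in> V0" "b \<in> V0" "a \<noteq> b" "a \<noteq> u" "b \<noteq> u" "{u, a} \<in> ?G" "{u, b} \<in> ?G"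
    have "{a, b} \<noteq> e" using h(4,5) uw(1) by auto
    then show "{a, b} \<in> ?G" using inG h by blast
  qed
  ultimately have "chordal V0 ?G" by (intro chordal_simplicial[of V0 ?G u])
  then show ?thesis using vec_in_X[of "N - {e}"] by simp
qed

lemma X_vec: assumes x: "x \<in> Xset V0 EH idx"
  obtains T where "T \<subseteq> N" "x = vec T" "chordal V0 (EH \<union> T)"
proof -
  let ?T = "{idx i | i. x $ i = 1}"
  have x01: "\<forall>i. x $ i \<in> {0, 1}" and ch: "chordal V0 (EH \<union> ?T)" using x unfolding Xset_def by auto
  have "?T \<subseteq> N" using range_idx by auto
  moreover have "x = vec ?T"
  proof (subst vec_eq_iff, intro allI)
    fix i
    have "idx i \<in> ?T \<longleftrightarrow> x $ i = 1"
    proof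
      assume "idx i \<in> ?T"
      then obtain j where "idx i = idx j" "x $ j = 1" by blast
      then show "x $ i = 1" using inj_idx by (metis injD)
    qed blast
    then show "x $ i = vec ?T $ i" using x01 unfolding vec_def by auto
  qed
  ultimately show ?thesis using that ch by blast
qed

lemma valid: assumes x: "x \<in> Xset V0 EH idx" shows "g x \<ge> 0"
proof -
  obtain T where T: "T \<subseteq> N" "x = vec T" "chordal V0 (EH \<union> T)" using X_vec[OF x] by blast
  have finF: "finite Fe" using Fe_N finN finite_subset by blast
  have k3: "real k - 3 \<ge> 0" using len by simp
  show ?thesis
  proof (cases "Fe \<subseteq> T")
    case True
    have "ext cs \<subseteq> EH \<union> T" using EH_Fe1 True by blast
    then have "is_cycle V0 (EH \<union> T) cs" unfolding is_cycle_ext using dist len by simp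
    then have "k - 3 \<le> card (I \<inter> (EH \<union> T))" by (rule chord_count[OF T(3)])
    moreover have "I \<inter> (EH \<union> T) = I \<inter> T" using I_E by blast
    ultimately have "k - 3 \<le> card (I \<inter> T)" by simp
    then have "real (k - 3) \<le> real (card (I \<inter> T))" by (rule of_nat_mono)
    then have "real k - 3 \<le> real (card (I \<inter> T))" using real_k3 by simp
    moreover have "Fe \<inter> T = Fe" using True by blast
    ultimately show ?thesis unfolding T(2) g_vec by simp
  next
    case False
    then have "Fe \<inter> T \<subset> Fe" by blast
    then have "card (Fe \<inter> T) < card Fe" using finF by (rule psubset_card_mono[rotated])
    then have "real (card (Fe \<inter> T)) - real (card Fe) + 1 \<le> 0" by linarith
    then have "(real k - 3) * (real (card (Fe \<inter> T)) - real (card Fe) + 1) \<le> 0"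
      using k3 by (simp add: mult_nonneg_nonpos)
    then show ?thesis unfolding T(2) g_vec by simp
  qed
qed

end



lemma dim_full: fixes S :: "(real^'n) set" assumes "\<And>i. axis i 1 \<in> span S" shows "dim S = CARD('n)"
proof -
  have "Basis \<subseteq> span S"
  proof
    fix x :: "real^'n" assume "x \<in> Basis"
    then obtain i u where "x = axis i u" "u \<in> (Basis :: real set)" unfolding Basis_vec_def by blast
    then have "x = axis i 1" by simp
    then show "x \<in> span S" using assms by simp
  qed
  then have "span (Basis :: (real^'n) set) \<subseteq> span S" by (metis span_mono span_span)
  then have "span S = UNIV" by auto
  then have "dim S = dim (UNIV :: (real^'n) set)" by (metis dim_span)
  then show ?thesis by simp
qed

context setting begin

abbreviation "X \<equiv> Xset V0 EH idx"
abbreviation "P \<equiv> convex hull X"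

lemma P_valid: "P \<subseteq> {x. avec \<bullet> x \<ge> - cst}"
proof (rule hull_minimal)
  show "X \<subseteq> {x. avec \<bullet> x \<ge> - cst}" using valid g_inner by fastforce
  show "convex {x. avec \<bullet> x \<ge> - cst}" by (rule convex_halfspace_ge)
qed

lemma g_P: "x \<in> P \<Longrightarrow> g x \<ge> 0"
  using P_valid g_inner by fastforce

lemma face_eq: "{x \<in> P. g x = 0} = P \<inter> {x. avec \<bullet> x = - cst}"
  using g_inner by auto

lemma face_face: "{x \<in> P. g x = 0} face_of P"
  unfolding face_eq
  by (rule face_of_Int_supporting_hyperplane_ge[OF convex_convex_hull]) (use P_valid in blast)

lemma X_P: "x \<in> X \<Longrightarrow> x \<in> P" by (rule hull_inc)

lemma v0: "cs ! 0 \<in> V0" using len by (intro nth_mem) linarith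

lemma avec_nz: "avec \<noteq> 0"
proof -
  have c: "s (cs ! 0) \<in> I" using s_props[OF v0] by blast
  then have "s (cs ! 0) \<in> range idx" using range_idx I_N by auto
  then obtain i where i: "idx i = s (cs ! 0)" by auto
  have "idx i \<notin> Fe" using i c I_Fe by auto
  then have "avec $ i = 1" using i c unfolding avec_def by simp
  then show ?thesis by auto
qed

lemma DIMn: "DIM(real^'n) = CARD('n)" by simp

lemma aff_P: "aff_dim P = int CARD('n)"
proof -
  let ?p = "vec N"
  have pX: "?p \<in> X" by (rule full_S)
  have "aff_dim P = aff_dim X" by (rule aff_dim_convex_hull)
  also have "\<dots> = int (dim ((\<lambda>x. x - ?p) ` X))"
    by (rule aff_dim_eq_dim_subtract) (rule hull_inc[OF pX])
  also have "dim ((\<lambda>x. x - ?p) ` X) = CARD('n)"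
  proof (rule dim_full)
    fix i
    let ?e = "idx i"
    have eN: "?e \<in> N" using range_idx by auto
    have "N = insert ?e (N - {?e})" using eN by blast
    then have "?p = vec (N - {?e}) + vec {?e}" using vec_insert[of ?e "N - {?e}"] by simp
    then have "axis i 1 = - (vec (N - {?e}) - ?p)" using vec_axis by simp
    moreover have "vec (N - {?e}) - ?p \<in> (\<lambda>x. x - ?p) ` X" using full_minus_S[OF eN] by blast
    ultimately show "axis i 1 \<in> span ((\<lambda>x. x - ?p) ` X)" by (metis span_base span_neg)
  qed
  finally show ?thesis .
qed

definition p0 where "p0 = vec (Fe \<union> Fan (cs ! 0))"
definition W where "W = span ((\<lambda>x. x - p0) ` {x \<in> P. g x = 0})"

lemma p0_face: "p0 \<in> {x \<in> P. g x = 0}"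
  unfolding p0_def using fan_S[OF v0] X_P by blast

lemma face_diff: assumes "q1 \<in> X" "g q1 = 0" "q2 \<in> X" "g q2 = 0" shows "q1 - q2 \<in> W"
proof -
  have "q1 - p0 \<in> W" "q2 - p0 \<in> W" unfolding W_def using assms X_P by (auto intro!: span_base)
  then have "(q1 - p0) - (q2 - p0) \<in> W" unfolding W_def by (rule span_diff)
  then show ?thesis by simp
qed

lemma R: assumes vy: "{v, y} \<in> I" shows "vec {{v, y}} - vec {s y} \<in> W"
proof -
  note F = flip_facts[OF vy]
  let ?B = "Fe \<union> (Fan v - {{v, y}})"
  have n1: "{v, y} \<notin> ?B" using vy I_Fe by blast
  have n2: "s y \<notin> ?B" using F(4,5) I_Fe by blast
  have e1: "Fe \<union> Fan v = insert {v, y} ?B" using F(6) by blast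
  have e2: "Fe \<union> (Fan v - {{v, y}}) \<union> {s y} = insert (s y) ?B" by blast
  have "vec (Fe \<union> Fan v) - vec (Fe \<union> (Fan v - {{v, y}}) \<union> {s y}) \<in> W"
    using face_diff fan_S[OF F(1)] flip_S[OF vy] by blast
  moreover have "vec (Fe \<union> Fan v) = vec ?B + vec {{v, y}}" unfolding e1 by (rule vec_insert[OF n1])
  moreover have "vec (Fe \<union> (Fan v - {{v, y}}) \<union> {s y}) = vec ?B + vec {s y}" unfolding e2 by (rule vec_insert[OF n2])
  ultimately show ?thesis by simp
qed

lemma pair_other: assumes "c \<in> I" "y \<in> c" shows "\<exists>v. c = {v, y}"
proof -
  obtain a b where ab: "c = {a, b}" using pair_in_I[OF assms(1)] by blast
  then show ?thesis using assms(2) by (auto simp: insert_commute)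
qed

lemma chain: "j < k \<Longrightarrow> vec {s (cs ! j)} - vec {s (cs ! 0)} \<in> W"
proof (induction j)
  case 0 then show ?case unfolding W_def by (simp add: span_zero)
next
  case (Suc j)
  have jk: "j + 1 < k" using Suc.prems by simp
  have c: "s (cs ! j) \<in> I" using s_props[of "cs ! j"] Suc.prems by simp
  have "cs ! (j + 1) \<in> s (cs ! j)" by (rule consec_s[OF jk])
  then obtain v where v: "s (cs ! j) = {v, cs ! (j + 1)}" using pair_other[OF c] by blast
  have "vec {s (cs ! j)} - vec {s (cs ! (j + 1))} \<in> W" using R[of v "cs ! (j+1)"] c v by simp
  moreover have "vec {s (cs ! j)} - vec {s (cs ! 0)} \<in> W" using Suc.IH Suc.prems by simp
  ultimately have "(vec {s (cs ! j)} - vec {s (cs ! 0)}) - (vec {s (cs ! j)} - vec {s (cs ! (j + 1))}) \<in> W"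
    unfolding W_def by (rule span_diff[rotated])
  then show ?case by simp
qed

definition d0 where "d0 = vec {s (cs ! 0)}"
definition Q where "Q = span (insert d0 ((\<lambda>x. x - p0) ` {x \<in> P. g x = 0}))"

lemma W_Q: "W \<subseteq> Q" unfolding W_def Q_def by (rule span_mono) blast

lemma I_Q: assumes c: "c \<in> I" shows "vec {c} \<in> Q"
proof -
  obtain a b where ab: "c = {a, b}" "a \<noteq> b" "a \<in> V0" "b \<in> V0" using pair_in_I[OF c] by blast
  obtain j where j: "j < k" "cs ! j = b" using ab(4) by (metis in_set_conv_nth)
  have "vec {c} - vec {s b} \<in> W" using R[of a b] c ab(1) by simp
  moreover have "vec {s b} - d0 \<in> W" using chain[OF j(1)] j(2) unfolding d0_def by simp
  ultimately have "(vec {c} - vec {s b}) + (vec {s b} - d0) \<in> W" unfolding W_def by (rule span_add)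
  then have "vec {c} - d0 \<in> Q" using W_Q by auto
  moreover have "d0 \<in> Q" unfolding Q_def by (rule span_base) simp
  ultimately have "(vec {c} - d0) + d0 \<in> Q" unfolding Q_def by (rule span_add)
  then show ?thesis by simp
qed

lemma finI_Q: "finite S \<Longrightarrow> S \<subseteq> I \<Longrightarrow> vec S \<in> Q"
proof (induction S rule: finite_induct)
  case empty then show ?case unfolding Q_def by (simp add: vec_empty span_zero)
next
  case (insert c S)
  have "vec S + vec {c} \<in> Q" unfolding Q_def
    using insert I_Q[of c] unfolding Q_def by (intro span_add) auto
  then show ?case using vec_insert[OF insert.hyps(2)] by simp
qed

lemma Fe_Q: assumes e: "e \<in> Fe" shows "vec {e} \<in> Q"
proof -
  let ?F = "Fan (cs ! 0)"
  have finF: "finite ?F" using Fan_I finite_int_edges finite_subset by blast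
  have "p0 - vec (Fe - {e}) \<in> W" unfolding p0_def using face_diff fan_S[OF v0] path_S[OF e] by blast
  moreover have "p0 = vec (Fe - {e}) + vec ?F + vec {e}"
  proof -
    have "Fe \<union> ?F = insert e ((Fe - {e}) \<union> ?F)" using e by blast
    moreover have "e \<notin> (Fe - {e}) \<union> ?F" using e Fan_I I_Fe by blast
    moreover have "(Fe - {e}) \<inter> ?F = {}" using Fan_I I_Fe by blast
    ultimately show ?thesis unfolding p0_def using vec_insert vec_Un by metis
  qed
  ultimately have "vec ?F + vec {e} \<in> W" by simp
  then have "vec ?F + vec {e} \<in> Q" using W_Q by blast
  moreover have "vec ?F \<in> Q" using finI_Q[OF finF Fan_I] .
  ultimately have "(vec ?F + vec {e}) - vec ?F \<in> Q" unfolding Q_def by (rule span_diff)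
  then show ?thesis by simp
qed

lemma aff_face: "aff_dim {x \<in> P. g x = 0} = int CARD('n) - 1"
proof (rule antisym)
  have "{x \<in> P. g x = 0} \<subseteq> {x. avec \<bullet> x = - cst}" using face_eq by blast
  then have "aff_dim {x \<in> P. g x = 0} \<le> aff_dim {x. avec \<bullet> x = - cst}" by (rule aff_dim_subset)
  also have "\<dots> = int CARD('n) - 1" using aff_dim_hyperplane[OF avec_nz] by simp
  finally show "aff_dim {x \<in> P. g x = 0} \<le> int CARD('n) - 1" .
next
  let ?D = "(\<lambda>x. x - p0) ` {x \<in> P. g x = 0}"
  have "aff_dim {x \<in> P. g x = 0} = int (dim ?D)"
    by (rule aff_dim_eq_dim_subtract) (rule hull_inc[OF p0_face])
  moreover have "dim (insert d0 ?D) = CARD('n)"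
  proof (rule dim_full)
    fix i
    have eN: "idx i \<in> N" using range_idx by auto
    then have "vec {idx i} \<in> Q" using N_eq I_Q Fe_Q by blast
    then show "axis i 1 \<in> span (insert d0 ?D)" using vec_axis unfolding Q_def by simp
  qed
  moreover have "dim (insert d0 ?D) \<le> dim ?D + 1" by (simp add: dim_insert)
  ultimately show "int CARD('n) - 1 \<le> aff_dim {x \<in> P. g x = 0}" by linarith
qed

lemma main: "facet_defining P g 0"
  unfolding facet_defining_def facet_of_def
  using g_P face_face p0_face aff_face aff_P by auto

end

theorem corollary1:
  fixes V :: "'a set" and E :: "'a set set" and cs :: "'a list"
    and idx :: "'n::finite \<Rightarrow> 'a set"
  assumes "simple_graph V E"
    and "distinct cs" and "set cs \<subseteq> V" and "length cs \<ge> 4"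
    and "int_edges cs \<inter> E = {}"
    and "bij_betw idx UNIV (nonedges (set cs) (induced_edges E (set cs)))"
  shows "facet_defining (convex hull (Xset (set cs) (induced_edges E (set cs)) idx))
           (\<lambda>x. (\<Sum>i | idx i \<in> int_edges cs. x $ i)
               - (real (length cs) - 3) *
                 ((\<Sum>i | idx i \<in> F_edges E cs. x $ i) - real (card (F_edges E cs)) + 1))
           0"
proof -
  interpret setting V E cs idx using assms by unfold_locales
  have geq: "(\<lambda>x. (\<Sum>i | idx i \<in> int_edges cs. x $ i)
               - (real (length cs) - 3) *
                 ((\<Sum>i | idx i \<in> F_edges E cs. x $ i) - real (card (F_edges E cs)) + 1)) = g"
    by (rule ext) (simp add: g_def)
  show ?thesis unfolding geq by (rule main)
qed

end
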